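(* Let $\boldsymbol{\tau}=(\tau_n\colon\mathcal{A}_{n+1}^+\to\mathcal{A}_n^+)_{n\in\mathbb{N}}$ be an everywhere growing and proper directive sequence. For $n\in\mathbb{N}$ let $\tilde{\mathcal{A}}_n=\mathcal{A}_n\cap\mathcal{L}(X^{(n)}_{\boldsymbol{\tau}})$ and let $\tilde\tau_n$ be the restriction of $\tau_n$ to $\tilde{\mathcal{A}}_{n+1}^+$. Then each $\tilde\tau_n$ takes values in $\tilde{\mathcal{A}}_n^+$, the directive sequence $\tilde{\boldsymbol{\tau}}=(\tilde\tau_n\colon\tilde{\mathcal{A}}_{n+1}^+\to\tilde{\mathcal{A}}_n^+)_{n\in\mathbb{N}}$ is letter-onto, and $X^{(n)}_{\tilde{\boldsymbol{\tau}}}=X^{(n)}_{\boldsymbol{\tau}}$ for every $n\in\mathbb{N}$. Conversely, if $\boldsymbol{\tau}$ is letter-onto, then $\mathcal{A}_n\subseteq\mathcal{L}(X^{(n)}_{\boldsymbol{\tau}})$ for every $n\in\mathbb{N}$.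
   Context: An alphabet is a finite set; $\mathcal{A}^+$ is the set of nonempty finite words. A morphism $\sigma\colon\mathcal{A}^+\to\mathcal{B}^+$ is a semigroup homomorphism; proper if there are letters $u,v$ such that every $\sigma(a)$ starts with $u$ and ends with $v$; letter-onto if every $b\in\mathcal{B}$ occurs in some $\sigma(a)$. For a directive sequence $\boldsymbol{\tau}=(\tau_n\colon\mathcal{A}_{n+1}^+\to\mathcal{A}_n^+)$, $\tau_{[n,N)}=\tau_n\circ\cdots\circ\tau_{N-1}$, the $n$th level is $X^{(n)}_{\boldsymbol{\tau}}=\{x\in\mathcal{A}_n^{\mathbb{Z}}:\forall\ell,\ x_{[-\ell,\ell]}$ occurs in $\tau_{[n,N)}(a)$ for some $N>n,a\in\mathcal{A}_N\}$. The sequence is everywhere growing if $\min_{a\in\mathcal{A}_N}|\tau_{[0,N)}(a)|\to\infty$, and proper / letter-onto if each $\tau_n$ is. The language $\mathcal{L}(X)$ of a subshift $X$ is the set of finite words occurring in some point of $X$ (so $\mathcal{A}_n\cap\mathcal{L}(X)$ is the set of letters occurring in points of $X$). *)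

theory Defs
  imports Main "HOL-Library.Sublist"
begin

text \<open>A morphism sigma : A^+ -> B^+ is represented by its action on letters
  (a function 'a => 'a list); it acts on words by concatenation.
  A directive sequence is a family of alphabets A :: nat => 'a set together with
  letter maps tau :: nat => 'a => 'a list, tau n : A (n+1)^+ -> A n ^+.\<close>

definition morph_word :: "('a \<Rightarrow> 'a list) \<Rightarrow> 'a list \<Rightarrow> 'a list" where
  "morph_word \<sigma> w = concat (map \<sigma> w)"

text \<open>tau_comp tau n k = tau_[n, n+k) = tau_n o ... o tau_(n+k-1), on letters.\<close>
fun tau_comp :: "(nat \<Rightarrow> 'a \<Rightarrow> 'a list) \<Rightarrow> nat \<Rightarrow> nat \<Rightarrow> 'a \<Rightarrow> 'a list" where
  "tau_comp \<tau> n 0 = (\<lambda>a. [a])"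
| "tau_comp \<tau> n (Suc k) = (\<lambda>a. morph_word (tau_comp \<tau> n k) (\<tau> (n + k) a))"

definition directive_seq :: "(nat \<Rightarrow> 'a set) \<Rightarrow> (nat \<Rightarrow> 'a \<Rightarrow> 'a list) \<Rightarrow> bool" where
  "directive_seq A \<tau> \<longleftrightarrow> (\<forall>n. finite (A n)) \<and>
     (\<forall>n. \<forall>a\<in>A (Suc n). \<tau> n a \<noteq> [] \<and> set (\<tau> n a) \<subseteq> A n)"

definition proper_seq :: "(nat \<Rightarrow> 'a set) \<Rightarrow> (nat \<Rightarrow> 'a \<Rightarrow> 'a list) \<Rightarrow> bool" where
  "proper_seq A \<tau> \<longleftrightarrow> (\<forall>n. \<exists>u v. \<forall>a\<in>A (Suc n).
      \<tau> n a \<noteq> [] \<and> hd (\<tau> n a) = u \<and> last (\<tau> n a) = v)"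

definition letter_onto_seq :: "(nat \<Rightarrow> 'a set) \<Rightarrow> (nat \<Rightarrow> 'a \<Rightarrow> 'a list) \<Rightarrow> bool" where
  "letter_onto_seq A \<tau> \<longleftrightarrow> (\<forall>n. \<forall>b\<in>A n. \<exists>a\<in>A (Suc n). b \<in> set (\<tau> n a))"

definition everywhere_growing :: "(nat \<Rightarrow> 'a set) \<Rightarrow> (nat \<Rightarrow> 'a \<Rightarrow> 'a list) \<Rightarrow> bool" where
  "everywhere_growing A \<tau> \<longleftrightarrow>
     (\<forall>L::nat. \<exists>N0. \<forall>N\<ge>N0. \<forall>a\<in>A N. L \<le> length (tau_comp \<tau> 0 N a))"

definition central_word :: "(int \<Rightarrow> 'a) \<Rightarrow> nat \<Rightarrow> 'a list" where
  "central_word x l = map (\<lambda>i. x (int i - int l)) [0..<2 * l + 1]"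

definition level :: "(nat \<Rightarrow> 'a set) \<Rightarrow> (nat \<Rightarrow> 'a \<Rightarrow> 'a list) \<Rightarrow> nat \<Rightarrow> (int \<Rightarrow> 'a) set" where
  "level A \<tau> n = {x. (\<forall>i. x i \<in> A n) \<and>
     (\<forall>l. \<exists>N>n. \<exists>a\<in>A N. sublist (central_word x l) (tau_comp \<tau> n (N - n) a))}"

definition lang :: "(int \<Rightarrow> 'a) set \<Rightarrow> 'a list set" where
  "lang X = {w. \<exists>x\<in>X. \<exists>i::int. w = map (\<lambda>j. x (i + int j)) [0..<length w]}"

end

theory Submission
  imports Defs
begin


abbreviation mw where "mw \<equiv> morph_word"

lemma sublist_trans': "sublist a b \<Longrightarrow> sublist b c \<Longrightarrow> sublist a c"
  by (auto simp: sublist_def) (metis append.assoc)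

lemma mw_Nil[simp]: "mw f [] = []" by (simp add: morph_word_def)
lemma mw_Cons[simp]: "mw f (a # w) = f a @ mw f w" by (simp add: morph_word_def)
lemma mw_append[simp]: "mw f (u @ v) = mw f u @ mw f v" by (simp add: morph_word_def)
lemma mw_comp: "mw f (mw g w) = mw (\<lambda>b. mw f (g b)) w" by (induct w) auto
lemma mw_id[simp]: "mw (\<lambda>a. [a]) w = w" by (induct w) auto
lemma set_mw: "set (mw f w) = (\<Union>b\<in>set w. set (f b))" by (induct w) auto
lemma length_mw: "length (mw f w) = sum_list (map (\<lambda>b. length (f b)) w)" by (induct w) auto
lemma sublist_mw: "sublist u v \<Longrightarrow> sublist (mw f u) (mw f v)"
  unfolding sublist_def by (metis mw_append)
lemma mw_len_ge: "(\<forall>b\<in>set w. f b \<noteq> []) \<Longrightarrow> length w \<le> length (mw f w)"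
proof (induct w)
  case (Cons a w)
  then have "0 < length (f a)" "length w \<le> length (mw f w)" by auto
  then have "Suc (length w) \<le> length (f a) + length (mw f w)" by linarith
  then show ?case by simp
qed simp
lemma mw_len_le: "(\<forall>b\<in>set w. length (f b) \<le> K) \<Longrightarrow> length (mw f w) \<le> K * length w"
  by (induct w) auto
lemma mw_mem_le: "b \<in> set w \<Longrightarrow> length (f b) \<le> length (mw f w)"
  by (induct w) auto
lemma mw_ne: "w \<noteq> [] \<Longrightarrow> (\<forall>b\<in>set w. f b \<noteq> []) \<Longrightarrow> mw f w \<noteq> []"
  by (cases w) auto
lemma mw_hd: "w \<noteq> [] \<Longrightarrow> f (hd w) \<noteq> [] \<Longrightarrow> hd (mw f w) = hd (f (hd w))"
  by (cases w) auto
lemma mw_last: "w \<noteq> [] \<Longrightarrow> f (last w) \<noteq> [] \<Longrightarrow> last (mw f w) = last (f (last w))"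
proof (induct w rule: rev_induct)
  case (snoc x xs) then show ?case by simp
qed simp

lemma tc_comp: "tau_comp \<tau> n (j + k) a = mw (tau_comp \<tau> n j) (tau_comp \<tau> (n + j) k a)"
proof (induct k arbitrary: a)
  case 0 then show ?case by simp
next
  case (Suc k)
  have e: "(\<lambda>b. mw (tau_comp \<tau> n j) (tau_comp \<tau> (n + j) k b)) = tau_comp \<tau> n (j + k)"
    using Suc by auto
  show ?case by (simp add: mw_comp e add.assoc)
qed

lemma tc_one[simp]: "tau_comp \<tau> n (Suc 0) a = \<tau> n a" by simp

lemma tc_Suc_left: "tau_comp \<tau> n (Suc k) a = mw (\<tau> n) (tau_comp \<tau> (Suc n) k a)"
proof -
  have "tau_comp \<tau> n (1 + k) a = mw (tau_comp \<tau> n 1) (tau_comp \<tau> (n + 1) k a)" by (rule tc_comp)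
  moreover have "tau_comp \<tau> n 1 = \<tau> n" by auto
  ultimately show ?thesis by simp
qed

lemma pigeon:
  fixes P :: "nat \<Rightarrow> 'b \<Rightarrow> bool"
  assumes "finite F" "\<forall>l. \<exists>a\<in>F. P l a" "\<And>l l' a. P l a \<Longrightarrow> l' \<le> l \<Longrightarrow> P l' a"
  shows "\<exists>a\<in>F. \<forall>l. P l a"
proof (rule ccontr)
  assume "\<not> ?thesis"
  then have "\<forall>a\<in>F. \<exists>l. \<not> P l a" by blast
  then obtain g where g: "\<forall>a\<in>F. \<not> P (g a) a" by metis
  obtain a where a: "a \<in> F" "P (Max (g ` F)) a" using assms(2) by blast
  have "g a \<le> Max (g ` F)" using a(1) assms(1) by auto
  then have "P (g a) a" using assms(3) a(2) by blast
  then show False using g a(1) by blast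
qed

lemma cut_left:
  "\<forall>b\<in>set h. f b \<noteq> [] \<Longrightarrow> mw f h = P @ z \<Longrightarrow> z \<noteq> [] \<Longrightarrow>
   \<exists>hp h' \<alpha>. h = hp @ h' \<and> h' \<noteq> [] \<and> mw f h' = \<alpha> @ z \<and> length \<alpha> < length (f (hd h')) \<and> P = mw f hp @ \<alpha>"
proof (induct h arbitrary: P)
  case Nil then show ?case by simp
next
  case (Cons b t)
  show ?case
  proof (cases "length P < length (f b)")
    case True
    then show ?thesis using Cons.prems by (intro exI[of _ "[]"] exI[of _ "b # t"] exI[of _ P]) auto
  next
    case False
    from Cons.prems(2) have eq: "f b @ mw f t = P @ z" by simp
    then have "f b = take (length (f b)) P \<and> mw f t = drop (length (f b)) P @ z"
      using False by (simp add: append_eq_append_conv_if)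
    then obtain P' where P': "P = f b @ P'" "mw f t = P' @ z"
      by (metis append_take_drop_id)
    from Cons.hyps[OF _ P'(2) Cons.prems(3)] Cons.prems(1) obtain hp h' \<alpha> where
      "t = hp @ h'" "h' \<noteq> []" "mw f h' = \<alpha> @ z" "length \<alpha> < length (f (hd h'))" "P' = mw f hp @ \<alpha>" by auto
    then show ?thesis using P' by (intro exI[of _ "b # hp"] exI[of _ h'] exI[of _ \<alpha>]) auto
  qed
qed

lemma cut_right:
  "mw f h = z @ S \<Longrightarrow> z \<noteq> [] \<Longrightarrow>
   \<exists>h' hs \<beta>. h = h' @ hs \<and> h' \<noteq> [] \<and> mw f h' = z @ \<beta> \<and> length \<beta> < length (f (last h')) \<and> S = \<beta> @ mw f hs"
proof (induct h arbitrary: S rule: rev_induct)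
  case Nil then show ?case by simp
next
  case (snoc b t)
  show ?case
  proof (cases "length S < length (f b)")
    case True
    then show ?thesis using snoc.prems by (intro exI[of _ "t @ [b]"] exI[of _ "[]"] exI[of _ S]) auto
  next
    case False
    from snoc.prems(1) have eq: "mw f t @ f b = z @ S" by simp
    have "length z \<le> length (mw f t)" using False arg_cong[OF eq, of length] by simp
    then have "z = take (length z) (mw f t) \<and> S = drop (length z) (mw f t) @ f b"
      using eq[symmetric] by (simp add: append_eq_append_conv_if)
    then obtain S' where S': "S = S' @ f b" "mw f t = z @ S'"
      by (metis append_take_drop_id)
    from snoc.hyps[OF S'(2) snoc.prems(2)] obtain h' hs \<beta> where
      "t = h' @ hs" "h' \<noteq> []" "mw f h' = z @ \<beta>" "length \<beta> < length (f (last h'))" "S' = \<beta> @ mw f hs" by auto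
    then show ?thesis using S' by (intro exI[of _ h'] exI[of _ "hs @ [b]"] exI[of _ \<beta>]) auto
  qed
qed

lemma cover:
  assumes "\<forall>b\<in>set h. f b \<noteq> []" "mw f h = P @ w @ S" "w \<noteq> []"
  shows "\<exists>hp hm hs \<alpha> \<beta>. h = hp @ hm @ hs \<and> hm \<noteq> [] \<and> mw f hm = \<alpha> @ w @ \<beta> \<and>
     length \<alpha> < length (f (hd hm)) \<and> length \<beta> < length (f (last hm)) \<and>
     P = mw f hp @ \<alpha> \<and> S = \<beta> @ mw f hs"
proof -
  obtain hp h' \<alpha> where 1: "h = hp @ h'" "h' \<noteq> []" "mw f h' = \<alpha> @ (w @ S)"
     "length \<alpha> < length (f (hd h'))" "P = mw f hp @ \<alpha>"
    using cut_left[OF assms(1), of P "w @ S"] assms(2,3) by auto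
  obtain hm hs \<beta> where 2: "h' = hm @ hs" "hm \<noteq> []" "mw f hm = (\<alpha> @ w) @ \<beta>"
     "length \<beta> < length (f (last hm))" "S = \<beta> @ mw f hs"
    using cut_right[of f h' "\<alpha> @ w" S] 1(3) assms(3) by auto
  have "hd h' = hd hm" using 2 by simp
  then show ?thesis using 1 2 by (intro exI[of _ hp] exI[of _ hm] exI[of _ hs] exI[of _ \<alpha>] exI[of _ \<beta>]) auto
qed

lemma len2: "2 \<le> length hm \<Longrightarrow> length (f (hd hm)) + length (f (last hm)) \<le> length (mw f hm)"
proof -
  assume "2 \<le> length hm"
  then obtain x y r where hm: "hm = x # y # r" by (cases hm; cases "tl hm") auto
  have "length (f (last (y # r))) \<le> length (mw f (y # r))" by (rule mw_mem_le) simp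
  then show ?thesis using hm by simp
qed

lemma len3: "3 \<le> length hm \<Longrightarrow> length (f (hd hm)) + length (f (hm ! 1)) + length (f (last hm)) \<le> length (mw f hm)"
proof -
  assume "3 \<le> length hm"
  then obtain x y z r where hm: "hm = x # y # z # r"
    by (cases hm; cases "tl hm"; cases "tl (tl hm)") auto
  have "length (f (last (z # r))) \<le> length (mw f (z # r))" by (rule mw_mem_le) simp
  then show ?thesis using hm by simp
qed

lemma junction_sub:
  assumes "D @ E = \<alpha> @ w @ \<beta>" "length \<alpha> < length D" "length \<beta> < length E"
    "D = P @ X" "E = Y @ Q" "length w \<le> length X" "length w \<le> length Y"
  shows "sublist w (X @ Y)"
proof -
  have L: "length \<alpha> + length w + length \<beta> = length D + length E"
    using arg_cong[OF assms(1), of length] by simp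
  have a: "length P \<le> length \<alpha>" using L assms by simp
  have b: "length Q \<le> length \<beta>" using L assms by simp
  have "P @ (X @ E) = \<alpha> @ (w @ \<beta>)" using assms(1,4) by simp
  then have "P = take (length P) \<alpha>" using a by (simp add: append_eq_append_conv_if)
  then obtain \<alpha>2 where a2: "\<alpha> = P @ \<alpha>2" by (metis append_take_drop_id)
  have "(\<alpha> @ w) @ \<beta> = (D @ Y) @ Q" using assms(1,5) by simp
  moreover have "length (\<alpha> @ w) \<le> length (D @ Y)" using L assms by simp
  ultimately have "\<beta> = drop (length (\<alpha> @ w)) (D @ Y) @ Q"
    by (metis append_eq_append_conv_if)
  then obtain \<beta>1 where b1: "\<beta> = \<beta>1 @ Q" by metis
  have "P @ X @ Y @ Q = P @ \<alpha>2 @ w @ \<beta>1 @ Q" using assms(1,4,5) a2 b1 by simp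
  then have "X @ Y = \<alpha>2 @ w @ \<beta>1" by simp
  then show ?thesis by (auto simp: sublist_def)
qed



locale DSq =
  fixes A :: "nat \<Rightarrow> 'a set" and \<tau> :: "nat \<Rightarrow> 'a \<Rightarrow> 'a list" and U V :: "nat \<Rightarrow> 'a"
  assumes ds: "directive_seq A \<tau>" and eg: "everywhere_growing A \<tau>"
  and hdU: "\<And>n a. a \<in> A (Suc n) \<Longrightarrow> hd (\<tau> n a) = U n"
  and lastV: "\<And>n a. a \<in> A (Suc n) \<Longrightarrow> last (\<tau> n a) = V n"
begin

abbreviation T where "T \<equiv> tau_comp \<tau>"
definition Lg where "Lg n = {w. \<exists>N>n. \<exists>a\<in>A N. sublist w (T n (N - n) a)}"
definition E where "E n w \<longleftrightarrow> (\<forall>l. \<exists>p s. l \<le> length p \<and> l \<le> length s \<and> p @ w @ s \<in> Lg n)"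

lemma fin: "finite (A n)" using ds by (simp add: directive_seq_def)
lemma tau_ne: "a \<in> A (Suc n) \<Longrightarrow> \<tau> n a \<noteq> []" using ds by (simp add: directive_seq_def)
lemma tau_set: "a \<in> A (Suc n) \<Longrightarrow> set (\<tau> n a) \<subseteq> A n" using ds by (simp add: directive_seq_def)

lemma T_props: "a \<in> A (n + k) \<Longrightarrow> set (T n k a) \<subseteq> A n \<and> T n k a \<noteq> []"
proof (induct k arbitrary: a)
  case 0 then show ?case by simp
next
  case (Suc k)
  have a: "a \<in> A (Suc (n + k))" using Suc.prems by simp
  have s: "\<forall>b\<in>set (\<tau> (n + k) a). b \<in> A (n + k)" using tau_set[OF a] by auto
  have "set (T n (Suc k) a) \<subseteq> A n" using s Suc.hyps by (auto simp: set_mw)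
  moreover have "\<forall>b\<in>set (\<tau> (n + k) a). T n k b \<noteq> []" using s Suc.hyps by blast
  then have "T n (Suc k) a \<noteq> []" using mw_ne[OF tau_ne[OF a]] by simp
  ultimately show ?case by simp
qed

lemma T_set: "a \<in> A (n + k) \<Longrightarrow> set (T n k a) \<subseteq> A n" using T_props by blast
lemma T_ne: "a \<in> A (n + k) \<Longrightarrow> T n k a \<noteq> []" using T_props by blast

lemma T_hd_last: assumes "0 < k" "a \<in> A (n + k)"
  shows "hd (T n k a) = U n \<and> last (T n k a) = V n"
proof -
  obtain k' where k: "k = Suc k'" using assms(1) by (cases k) auto
  let ?g = "T (Suc n) k' a"
  have g: "?g \<noteq> []" "set ?g \<subseteq> A (Suc n)" using T_props[of a "Suc n" k'] assms(2) k by auto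
  have e: "T n k a = mw (\<tau> n) ?g" using k tc_Suc_left by metis
  have "hd ?g \<in> A (Suc n)" "last ?g \<in> A (Suc n)" using g by auto
  then show ?thesis using e g mw_hd[OF g(1), of "\<tau> n"] mw_last[OF g(1), of "\<tau> n"] tau_ne hdU lastV
    by auto
qed

lemma UV_mem: "A (Suc n) \<noteq> {} \<Longrightarrow> U n \<in> A n \<and> V n \<in> A n"
proof -
  assume "A (Suc n) \<noteq> {}"
  then obtain a where a: "a \<in> A (Suc n)" by auto
  have "hd (\<tau> n a) \<in> set (\<tau> n a)" "last (\<tau> n a) \<in> set (\<tau> n a)" using tau_ne[OF a] by auto
  then show ?thesis using a hdU lastV tau_set by fastforce
qed

lemma Lg_set: "w \<in> Lg n \<Longrightarrow> set w \<subseteq> A n"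
proof -
  assume "w \<in> Lg n"
  then obtain N a where "N > n" "a \<in> A N" "sublist w (T n (N - n) a)" by (auto simp: Lg_def)
  moreover have "N = n + (N - n)" using \<open>N > n\<close> by simp
  ultimately show ?thesis using T_set[of a n "N - n"] set_mono_sublist by fastforce
qed

lemma Lg_sub: "w \<in> Lg n \<Longrightarrow> sublist v w \<Longrightarrow> v \<in> Lg n"
  by (auto simp: Lg_def intro: sublist_trans')

lemma Lg_lift: assumes "w \<in> Lg (n + k)" shows "mw (T n k) w \<in> Lg n"
proof -
  obtain N a where N: "N > n + k" "a \<in> A N" "sublist w (T (n + k) (N - (n + k)) a)"
    using assms by (auto simp: Lg_def)
  have "mw (T n k) (T (n + k) (N - (n + k)) a) = T n (k + (N - (n + k))) a" by (simp add: tc_comp)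
  also have "k + (N - (n + k)) = N - n" using N(1) by simp
  finally have "sublist (mw (T n k) w) (T n (N - n) a)" using sublist_mw[OF N(3), of "T n k"] by simp
  moreover have "N > n" using N(1) by simp
  ultimately show ?thesis using N(2) unfolding Lg_def by blast
qed

lemma E_Lg: "E n w \<Longrightarrow> w \<in> Lg n"
proof -
  assume "E n w"
  then obtain p s where "p @ w @ s \<in> Lg n" by (auto simp: E_def)
  then show ?thesis using Lg_sub by blast
qed

lemma bounded: "finite B \<Longrightarrow> \<exists>K. \<forall>b\<in>B. (f b :: nat) \<le> K"
  by (rule exI[of _ "Max (f ` B)"]) auto

lemma growth: "\<exists>N0\<ge>n. \<forall>N\<ge>N0. \<forall>a\<in>A N. L \<le> length (T n (N - n) a)"
proof -
  obtain K0 where K0: "\<forall>b\<in>A n. length (T 0 n b) \<le> K0" using bounded[OF fin[of n], of "\<lambda>b. length (T 0 n b)"] by blast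
  define K where "K = max 1 K0"
  have K: "\<forall>b\<in>A n. length (T 0 n b) \<le> K" "1 \<le> K" using K0 by (auto simp: K_def)
  obtain N0' where N0': "\<forall>N\<ge>N0'. \<forall>a\<in>A N. L * K \<le> length (T 0 N a)"
    using eg unfolding everywhere_growing_def by blast
  show ?thesis
  proof (intro exI[of _ "max N0' n"] conjI allI impI ballI)
    fix N a assume N: "max N0' n \<le> N" and a: "a \<in> A N"
    have "T 0 (n + (N - n)) a = mw (T 0 n) (T (0 + n) (N - n) a)" by (rule tc_comp)
    then have e: "T 0 N a = mw (T 0 n) (T n (N - n) a)" using N by simp
    have "set (T n (N - n) a) \<subseteq> A n" using T_set[of a n "N - n"] a N by simp
    then have "length (T 0 N a) \<le> K * length (T n (N - n) a)" using e K by (auto intro!: mw_len_le)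
    moreover have "L * K \<le> length (T 0 N a)" using N0' N a by auto
    ultimately have "K * L \<le> K * length (T n (N - n) a)" by (metis order_trans mult.commute)
    moreover have "0 < K" using K(2) by simp
    ultimately show "L \<le> length (T n (N - n) a)" by simp
  qed simp
qed

end


context DSq begin

lemma ext_step: assumes "E n z" shows "\<exists>c\<in>A n. \<exists>d\<in>A n. E n (c # z @ [d])"
proof -
  define P where "P = (\<lambda>l cd. \<exists>p s. l \<le> length p \<and> l \<le> length s \<and> p @ (fst cd # z @ [snd cd]) @ s \<in> Lg n)"
  let ?P = P
  have "\<exists>cd\<in>A n \<times> A n. \<forall>l. ?P l cd"
  proof (rule pigeon)
    show "finite (A n \<times> A n)" using fin by simp
    show "\<forall>l. \<exists>cd\<in>A n \<times> A n. ?P l cd"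
    proof
      fix l
      obtain p s where ps: "Suc l \<le> length p" "Suc l \<le> length s" "p @ z @ s \<in> Lg n"
        using assms unfolding E_def by blast
      have pn: "p \<noteq> []" "s \<noteq> []" using ps by auto
      have st: "set (p @ z @ s) \<subseteq> A n" using Lg_set[OF ps(3)] .
      have m: "last p \<in> A n" "hd s \<in> A n" using st pn by auto
      have eq: "butlast p @ (last p # z @ [hd s]) @ tl s = p @ z @ s"
        using pn by simp
      have "?P l (last p, hd s)" unfolding P_def
        using ps eq by (intro exI[of _ "butlast p"] exI[of _ "tl s"]) auto
      then show "\<exists>cd\<in>A n \<times> A n. ?P l cd" using m by blast
    qed
    show "\<And>l l' cd. ?P l cd \<Longrightarrow> l' \<le> l \<Longrightarrow> ?P l' cd" unfolding P_def by force
  qed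
  then show ?thesis unfolding E_def P_def by auto
qed

lemma koenig: assumes "E n [a]" shows "[a] \<in> lang (level A \<tau> n)"
proof -
  define nxt where "nxt = (\<lambda>z. SOME z'. \<exists>c\<in>A n. \<exists>d\<in>A n. z' = c # z @ [d] \<and> E n z')"
  define zs where "zs = (\<lambda>k. (nxt ^^ k) [a])"
  have step: "\<exists>c d. nxt z = c # z @ [d] \<and> E n (nxt z)" if "E n z" for z
  proof -
    have "\<exists>z'. \<exists>c\<in>A n. \<exists>d\<in>A n. z' = c # z @ [d] \<and> E n z'" using ext_step[OF that] by blast
    from someI_ex[OF this] show ?thesis unfolding nxt_def by blast
  qed
  have inv: "E n (zs k) \<and> length (zs k) = Suc (2 * k)" for k
  proof (induct k)
    case 0 then show ?case using assms by (simp add: zs_def)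
  next
    case (Suc k)
    then obtain c d where "nxt (zs k) = c # zs k @ [d]" "E n (nxt (zs k))" using step by blast
    then show ?case using Suc by (simp add: zs_def)
  qed
  have zsS: "\<exists>c d. zs (Suc k) = c # zs k @ [d]" for k
    using step[OF inv[THEN conjunct1, of k]] by (simp add: zs_def)
  have cons: "zs (k + d) ! (j + d) = zs k ! j" if "j < Suc (2 * k)" for k d j
  proof (induct d)
    case 0 then show ?case by simp
  next
    case (Suc d)
    obtain c e where ce: "zs (Suc (k + d)) = c # zs (k + d) @ [e]" using zsS by blast
    have "j + d < length (zs (k + d))" using inv[of "k + d"] that by simp
    then have "zs (k + Suc d) ! (j + Suc d) = zs (k + d) ! (j + d)" using ce by (simp add: nth_append)
    then show ?case using Suc by simp
  qed
  define x where "x = (\<lambda>i::int. zs (nat \<bar>i\<bar>) ! nat (i + int (nat \<bar>i\<bar>)))"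
  have cw: "central_word x l = zs l" for l
  proof (rule nth_equalityI)
    show "length (central_word x l) = length (zs l)" using inv[of l] by (simp add: central_word_def)
    fix i assume "i < length (central_word x l)"
    then have i: "i < Suc (2 * l)" by (simp add: central_word_def)
    define m where "m = nat \<bar>int i - int l\<bar>"
    define j where "j = nat (int i - int l + int m)"
    have mj: "m \<le> l" "j < Suc (2 * m)" "j + (l - m) = i" using i by (auto simp: m_def j_def)
    have "central_word x l ! i = x (int i - int l)" using i by (simp add: central_word_def del: upt_Suc)
    also have "\<dots> = zs m ! j" by (simp add: x_def m_def j_def)
    also have "\<dots> = zs (m + (l - m)) ! (j + (l - m))" using cons[OF mj(2)] by simp
    also have "\<dots> = zs l ! i" using mj by simp
    finally show "central_word x l ! i = zs l ! i" .
  qed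
  have xA: "x i \<in> A n" for i
  proof -
    have "nat (i + int (nat \<bar>i\<bar>)) < length (zs (nat \<bar>i\<bar>))" using inv[of "nat \<bar>i\<bar>"] by simp
    moreover have "set (zs (nat \<bar>i\<bar>)) \<subseteq> A n" using Lg_set[OF E_Lg] inv by blast
    ultimately show ?thesis unfolding x_def by (meson nth_mem subsetD)
  qed
  have xl: "x \<in> level A \<tau> n"
    unfolding level_def using xA cw E_Lg[OF inv[THEN conjunct1]] by (auto simp: Lg_def)
  have "x 0 = a" by (simp add: x_def zs_def)
  then have "[a] = map (\<lambda>j. x (0 + int j)) [0..<length [a]]" by simp
  then have "\<exists>i. [a] = map (\<lambda>j. x (i + int j)) [0..<length [a]]" by (rule exI)
  then have "\<exists>x\<in>level A \<tau> n. \<exists>i. [a] = map (\<lambda>j. x (i + int j)) [0..<length [a]]" using xl by (rule_tac bexI)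
  then show ?thesis unfolding lang_def by (rule CollectI)
qed

lemma lang_E: assumes "[a] \<in> lang (level A \<tau> n)" shows "E n [a] \<and> a \<in> A n"
proof -
  have "\<exists>x\<in>level A \<tau> n. \<exists>i. [a] = map (\<lambda>j. x (i + int j)) [0..<length [a]]"
    using assms unfolding lang_def by (rule CollectD)
  then obtain x where x1: "x \<in> level A \<tau> n" "\<exists>i. [a] = map (\<lambda>j. x (i + int j)) [0..<length [a]]"
    by (rule bexE)
  then obtain i where x2: "[a] = map (\<lambda>j. x (i + int j)) [0..<length [a]]"
    by (rule_tac exE)
  note x = x1(1) x2
  have xi: "x i = a" using x(2) by simp
  have aA: "a \<in> A n" using x(1) xi unfolding level_def by auto
  have "E n [a]" unfolding E_def
  proof
    fix l
    define L where "L = l + nat \<bar>i\<bar>"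
    define c where "c = central_word x L"
    have cL: "c \<in> Lg n" using x(1) unfolding level_def Lg_def c_def by auto
    define j0 where "j0 = nat (i + int L)"
    have j0: "j0 < length c" "l \<le> j0" "l \<le> length c - Suc j0"
      by (auto simp: c_def central_word_def j0_def L_def)
    have "c ! j0 = x (int j0 - int L)" using j0 by (simp add: c_def central_word_def del: upt_Suc)
    also have "int j0 - int L = i"
    proof -
      have "0 \<le> i + int L" unfolding L_def by arith
      then show ?thesis by (simp add: j0_def)
    qed
    finally have cj: "c ! j0 = a" using xi by simp
    have "c = take j0 c @ [a] @ drop (Suc j0) c" using id_take_nth_drop[OF j0(1)] cj by simp
    then show "\<exists>p s. l \<le> length p \<and> l \<le> length s \<and> p @ [a] @ s \<in> Lg n"
      using j0 cL by (intro exI[of _ "take j0 c"] exI[of _ "drop (Suc j0) c"]) auto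
  qed
  then show ?thesis using aA by simp
qed

lemma cw_E: assumes "x \<in> level A \<tau> n" shows "E n (central_word x l)"
  unfolding E_def
proof
  fix l'
  define c where "c = central_word x (l + l')"
  have cL: "c \<in> Lg n" using assms unfolding level_def Lg_def c_def by auto
  have e: "central_word x l = take (Suc (2 * l)) (drop l' c)"
    by (rule nth_equalityI) (auto simp: central_word_def c_def algebra_simps simp del: upt_Suc)
  have len: "length c = Suc (2 * (l + l'))" by (simp add: c_def central_word_def)
  have "take l' c @ take (Suc (2 * l)) (drop l' c) @ drop (Suc (2 * l)) (drop l' c) = c"
    by (simp only: append_take_drop_id)
  then have sp: "take l' c @ central_word x l @ drop (Suc (2 * l)) (drop l' c) = c" by (simp only: e)
  have "l' \<le> length (take l' c)" "l' \<le> length (drop (Suc (2 * l)) (drop l' c))" using len by auto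
  moreover have "take l' c @ central_word x l @ drop (Suc (2 * l)) (drop l' c) \<in> Lg n" using sp cL by simp
  ultimately show "\<exists>p s. l' \<le> length p \<and> l' \<le> length s \<and> p @ central_word x l @ s \<in> Lg n"
    by blast
qed

end


context DSq begin

lemma bound_upto: "\<exists>Bd. \<forall>j\<le>k. \<forall>a\<in>A (n + j). length (T n j a) \<le> Bd"
proof -
  define S where "S = (\<Union>j\<in>{..k}. (\<lambda>a. length (T n j a)) ` A (n + j))"
  have "finite S" unfolding S_def using fin by auto
  then have "\<forall>j\<le>k. \<forall>a\<in>A (n + j). length (T n j a) \<le> Max S"
    unfolding S_def by (auto intro!: Max_ge)
  then show ?thesis by blast
qed

lemma desub:
  assumes "E n w" "w \<noteq> []" "0 < k"
  shows "\<exists>hm. hm \<noteq> [] \<and> set hm \<subseteq> A (n + k) \<and> E (n + k) hm \<and>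
     (\<exists>\<alpha> \<beta>. mw (T n k) hm = \<alpha> @ w @ \<beta> \<and> length \<alpha> < length (T n k (hd hm))
        \<and> length \<beta> < length (T n k (last hm)))"
proof -
  obtain K where K: "\<forall>b\<in>A (n + k). length (T n k b) \<le> K"
    using bounded[OF fin[of "n + k"], of "\<lambda>b. length (T n k b)"] by blast
  obtain Bd where Bd: "\<forall>j\<le>k. \<forall>a\<in>A (n + j). length (T n j a) \<le> Bd" using bound_upto by blast
  define MC where "MC = (\<lambda>hm. \<exists>\<alpha> \<beta>. mw (T n k) hm = \<alpha> @ w @ \<beta> \<and> length \<alpha> < length (T n k (hd hm))
        \<and> length \<beta> < length (T n k (last hm)))"
  define P where "P = (\<lambda>l hm. MC hm \<and> (\<exists>p s. l \<le> length p \<and> l \<le> length s \<and> p @ hm @ s \<in> Lg (n + k)))"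
  define H where "H = {h. set h \<subseteq> A (n + k) \<and> length h \<le> length w + 2 * K}"
  have "\<exists>hm\<in>H. \<forall>l. P l hm"
  proof (rule pigeon)
    show "finite H" unfolding H_def by (rule finite_lists_length_le[OF fin])
    show "\<And>l l' a. P l a \<Longrightarrow> l' \<le> l \<Longrightarrow> P l' a" unfolding P_def by force
    show "\<forall>l. \<exists>hm\<in>H. P l hm"
    proof
      fix l
      define l' where "l' = K * l + K + Bd + 1"
      obtain p s where ps: "l' \<le> length p" "l' \<le> length s" "p @ w @ s \<in> Lg n"
        using assms(1) unfolding E_def by blast
      obtain N f where Nf: "N > n" "f \<in> A N" "sublist (p @ w @ s) (T n (N - n) f)"
        using ps(3) unfolding Lg_def by blast
      have kN: "k < N - n"
      proof (rule ccontr)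
        assume "\<not> k < N - n"
        then have "length (T n (N - n) f) \<le> Bd" using Bd Nf by auto
        moreover have "length (p @ w @ s) \<le> length (T n (N - n) f)" using Nf(3) by (rule sublist_length_le)
        ultimately show False using ps unfolding l'_def by simp
      qed
      define h where "h = T (n + k) (N - n - k) f"
      have "T n (k + (N - n - k)) f = mw (T n k) h" unfolding h_def by (rule tc_comp)
      then have Th: "T n (N - n) f = mw (T n k) h" using kN by simp
      have fA: "f \<in> A ((n + k) + (N - n - k))" using Nf kN by simp
      have hA: "set h \<subseteq> A (n + k)" unfolding h_def using T_set[OF fA] .
      have hL: "h \<in> Lg (n + k)" unfolding Lg_def h_def using Nf kN
        by (intro CollectI exI[of _ N]) (auto simp: diff_diff_left)
      obtain \<gamma> \<delta> where gd: "T n (N - n) f = \<gamma> @ (p @ w @ s) @ \<delta>" using Nf(3) unfolding sublist_def by blast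
      have ne: "\<forall>b\<in>set h. T n k b \<noteq> []" using hA T_ne by auto
      have "mw (T n k) h = (\<gamma> @ p) @ w @ (s @ \<delta>)" using gd Th by simp
      from cover[OF ne this assms(2)] obtain hp hm hs \<alpha> \<beta> where
        cv: "h = hp @ hm @ hs" "hm \<noteq> []" "mw (T n k) hm = \<alpha> @ w @ \<beta>"
        "length \<alpha> < length (T n k (hd hm))" "length \<beta> < length (T n k (last hm))"
        "\<gamma> @ p = mw (T n k) hp @ \<alpha>" "s @ \<delta> = \<beta> @ mw (T n k) hs" by blast
      have sets: "set hp \<subseteq> A (n + k)" "set hm \<subseteq> A (n + k)" "set hs \<subseteq> A (n + k)" using hA cv(1) by auto
      have hdA: "hd hm \<in> A (n + k)" "last hm \<in> A (n + k)" using sets(2) cv(2) by auto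
      have aK: "length \<alpha> < K" "length \<beta> < K" using cv(4,5) K hdA by force+
      have m1: "length (mw (T n k) hp) \<le> K * length hp" using sets K by (auto intro!: mw_len_le)
      have m2: "length (mw (T n k) hs) \<le> K * length hs" using sets K by (auto intro!: mw_len_le)
      have "length p \<le> length (mw (T n k) hp) + length \<alpha>" using arg_cong[OF cv(6), of length] by simp
      then have "K * l < K * length hp" using m1 aK ps(1) unfolding l'_def by linarith
      then have lhp: "l \<le> length hp" by simp
      have "length s \<le> length (mw (T n k) hs) + length \<beta>" using arg_cong[OF cv(7), of length] by simp
      then have "K * l < K * length hs" using m2 aK ps(2) unfolding l'_def by linarith
      then have lhs: "l \<le> length hs" by simp
      have "length hm \<le> length (mw (T n k) hm)" using sets ne cv(1) by (auto intro!: mw_len_ge)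
      then have "length hm \<le> length w + 2 * K" using cv(3) aK by simp
      then have "hm \<in> H" using sets unfolding H_def by simp
      moreover have "P l hm" unfolding P_def MC_def using cv lhp lhs hL by blast
      ultimately show "\<exists>hm\<in>H. P l hm" by blast
    qed
  qed
  then obtain hm where hm: "hm \<in> H" "\<forall>l. P l hm" by blast
  have mc: "MC hm" using hm P_def by blast
  have "hm \<noteq> []" using mc assms(2) unfolding MC_def by auto
  moreover have "E (n + k) hm" using hm unfolding E_def P_def by blast
  ultimately show ?thesis using hm(1) mc unfolding H_def MC_def by blast
qed

end


context DSq begin

definition AtL where "AtL M = {a \<in> A M. [a] \<in> lang (level A \<tau> M)}"

lemma AtL_iff: "a \<in> AtL M \<longleftrightarrow> a \<in> A M \<and> E M [a]"
  using koenig lang_E unfolding AtL_def by blast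

lemma T1: "T n 1 = \<tau> n" by (rule ext) simp

lemma junc:
  assumes "Suc K < M" "f \<in> A M" "2 \<le> length (T (Suc K) (M - Suc K) f)"
  shows "sublist [V K, U K] (T K (M - K) f)"
proof -
  let ?g = "T (Suc K) (M - Suc K) f"
  have e: "T K (M - K) f = mw (\<tau> K) ?g"
    using tc_Suc_left[of \<tau> K "M - Suc K" f] assms(1) by (simp add: Suc_diff_Suc)
  have gA: "set ?g \<subseteq> A (Suc K)" using T_set[of f "Suc K" "M - Suc K"] assms by simp
  obtain g1 g2 r where g: "?g = g1 # g2 # r" using assms(3)
    by (cases ?g; cases "tl ?g") auto
  have g12: "g1 \<in> A (Suc K)" "g2 \<in> A (Suc K)" using gA g by auto
  have t1: "\<tau> K g1 = butlast (\<tau> K g1) @ [V K]" using tau_ne[OF g12(1)] lastV[OF g12(1)]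
    by (metis append_butlast_last_id)
  have t2: "\<tau> K g2 = U K # tl (\<tau> K g2)" using tau_ne[OF g12(2)] hdU[OF g12(2)]
    by (metis list.collapse)
  have "T K (M - K) f = butlast (\<tau> K g1) @ [V K, U K] @ (tl (\<tau> K g2) @ mw (\<tau> K) r)"
    using e g t1 t2 by simp
  then show ?thesis by (metis sublist_appendI)
qed

lemma junc_exists:
  assumes "\<forall>M\<ge>Suc K. \<exists>f. f \<in> B M" "\<forall>M. B M \<subseteq> A M"
  shows "\<exists>M>K. \<exists>f\<in>B M. sublist [V K, U K] (T K (M - K) f)"
proof -
  obtain N0 where N0: "N0 \<ge> Suc K" "\<forall>N\<ge>N0. \<forall>a\<in>A N. 2 \<le> length (T (Suc K) (N - Suc K) a)"
    using growth[of "Suc K" 2] by blast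
  obtain f where f: "f \<in> B (Suc N0)" using assms(1) N0(1) by fastforce
  have "f \<in> A (Suc N0)" using f assms(2) by blast
  moreover have "2 \<le> length (T (Suc K) (Suc N0 - Suc K) f)"
    using N0(2)[rule_format, of "Suc N0" f] \<open>f \<in> A (Suc N0)\<close> by simp
  ultimately have "sublist [V K, U K] (T K (Suc N0 - K) f)" using N0 by (intro junc) auto
  then show ?thesis using f N0(1) by (intro exI[of _ "Suc N0"]) auto
qed

lemma part2:
  assumes "b \<in> A n" "E n [b]"
  shows "\<exists>a\<in>A (Suc n). E (Suc n) [a] \<and> b \<in> set (\<tau> n a)"
proof -
  obtain hm \<alpha> \<beta> where hm: "hm \<noteq> []" "set hm \<subseteq> A (n + 1)" "E (n + 1) hm"
    "mw (T n 1) hm = \<alpha> @ [b] @ \<beta>" "length \<alpha> < length (T n 1 (hd hm))"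
    "length \<beta> < length (T n 1 (last hm))"
    using desub[OF assms(2), of 1] by auto
  have "length hm = 1"
  proof (rule ccontr)
    assume "length hm \<noteq> 1"
    moreover have "length hm \<noteq> 0" using hm(1) by simp
    ultimately have "2 \<le> length hm" by linarith
    from len2[OF this, of "T n 1"] hm(4,5,6) show False by simp
  qed
  then obtain a where a: "hm = [a]" by (cases hm) auto
  then show ?thesis using hm T1 by (auto simp: in_set_conv_decomp)
qed

lemma part1:
  assumes "a \<in> A (Suc n)" "E (Suc n) [a]" "b \<in> set (\<tau> n a)"
  shows "E n [b]"
  unfolding E_def
proof
  fix l
  obtain p s where ps: "l \<le> length p" "l \<le> length s" "p @ [a] @ s \<in> Lg (n + 1)"
    using assms(2) unfolding E_def by simp blast
  have "mw (T n 1) (p @ [a] @ s) \<in> Lg n" by (rule Lg_lift[OF ps(3)])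
  then have L: "mw (\<tau> n) p @ \<tau> n a @ mw (\<tau> n) s \<in> Lg n" by (simp add: T1)
  obtain \<alpha> \<beta> where ab: "\<tau> n a = \<alpha> @ b # \<beta>" using assms(3) by (meson split_list)
  have pA: "set p \<subseteq> A (Suc n)" "set s \<subseteq> A (Suc n)" using Lg_set[OF ps(3)] by auto
  have "length p \<le> length (mw (\<tau> n) p)" "length s \<le> length (mw (\<tau> n) s)"
    using pA tau_ne by (auto intro!: mw_len_ge)
  then show "\<exists>p s. l \<le> length p \<and> l \<le> length s \<and> p @ [b] @ s \<in> Lg n"
    using ps L ab by (intro exI[of _ "mw (\<tau> n) p @ \<alpha>"] exI[of _ "\<beta> @ mw (\<tau> n) s"]) auto
qed

lemma chain:
  assumes lo: "letter_onto_seq A \<tau>" and a: "a \<in> A n"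
  shows "\<exists>b\<in>A (n + k). a \<in> set (T n k b)"
proof (induct k)
  case 0 then show ?case using a by auto
next
  case (Suc k)
  then obtain b where b: "b \<in> A (n + k)" "a \<in> set (T n k b)" by blast
  obtain c where c: "c \<in> A (Suc (n + k))" "b \<in> set (\<tau> (n + k) c)"
    using lo b(1) unfolding letter_onto_seq_def by blast
  have "a \<in> set (T n (Suc k) c)" using b c by (auto simp: set_mw)
  then show ?case using c by auto
qed

lemma three_legal:
  assumes lo: "letter_onto_seq A \<tau>" and b: "b \<in> A N"
  shows "\<exists>d e. [d, b, e] \<in> Lg N"
proof -
  have ne: "\<exists>f. f \<in> A M" if "M \<ge> N" for M
    using chain[OF lo b, of "M - N"] that by auto
  obtain N0 where N0: "N0 \<ge> N" "\<forall>M\<ge>N0. \<forall>a\<in>A M. 2 \<le> length (T N (M - N) a)"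
    using growth[of N 2] by blast
  define M where "M = Suc N0"
  have MN: "M > N" "0 < M - N" "N + (M - N) = M" using N0 by (auto simp: M_def)
  have len: "\<forall>a\<in>A M. 2 \<le> length (T N (M - N) a)" using N0 by (simp add: M_def)
  have hl: "hd (T N (M - N) z) = U N \<and> last (T N (M - N) z) = V N" if "z \<in> A M" for z
    using T_hd_last[OF MN(2), of z] MN(3) that by simp
  obtain M' f where Mf: "M' > M" "f \<in> A M'" "sublist [V M, U M] (T M (M' - M) f)"
    using junc_exists[of M A] ne MN by auto
  have "[V M, U M] \<in> Lg M" using Mf unfolding Lg_def by blast
  then have "[V M, U M] \<in> Lg (N + (M - N))" using MN(3) by simp
  from Lg_lift[OF this] have "mw (T N (M - N)) [V M, U M] \<in> Lg N" .
  then have XY: "T N (M - N) (V M) @ T N (M - N) (U M) \<in> Lg N" by simp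
  have UVM: "U M \<in> A M" "V M \<in> A M" using UV_mem ne[of "Suc M"] MN by auto
  obtain c where c: "c \<in> A M" "b \<in> set (T N (M - N) c)" using chain[OF lo b, of "M - N"] MN(3) by auto
  then obtain \<alpha> \<beta> where ab: "T N (M - N) c = \<alpha> @ b # \<beta>" by (meson split_list)
  have cL: "T N (M - N) c \<in> Lg N" using c MN unfolding Lg_def by blast
  show ?thesis
  proof (cases "\<alpha> = []")
    case True
    then have bU: "b = U N" using hl[OF c(1)] ab by simp
    obtain e r where Y: "T N (M - N) (U M) = U N # e # r"
      using len UVM hl[OF UVM(1)] by (cases "T N (M - N) (U M)"; cases "tl (T N (M - N) (U M))") auto
    have Xn: "T N (M - N) (V M) \<noteq> []" using len UVM by fastforce
    then have X: "T N (M - N) (V M) = butlast (T N (M - N) (V M)) @ [V N]"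
      using hl[OF UVM(2)] by (metis append_butlast_last_id)
    have "T N (M - N) (V M) @ T N (M - N) (U M) = butlast (T N (M - N) (V M)) @ [V N, b, e] @ r"
      using X Y bU by (metis append.assoc append_Cons append_Nil)
    then show ?thesis using Lg_sub[OF XY] by (metis sublist_appendI)
  next
    case False
    show ?thesis
    proof (cases "\<beta> = []")
      case True
      then have bV: "b = V N" using hl[OF c(1)] ab by simp
      have l2: "2 \<le> length (T N (M - N) (V M))" using len UVM by blast
      obtain r d where X: "T N (M - N) (V M) = r @ [d, V N]"
      proof -
        let ?X = "T N (M - N) (V M)"
        have "rev ?X = V N # hd (tl (rev ?X)) # tl (tl (rev ?X))"
          using l2 hl[OF UVM(2)]
          by (cases "rev ?X"; cases "tl (rev ?X)") (auto simp: last_rev[symmetric] hd_rev)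
        then have "?X = rev (tl (tl (rev ?X))) @ [hd (tl (rev ?X)), V N]"
          by (metis rev_rev_ident rev.simps append.assoc append_Cons append_Nil)
        then show ?thesis using that by blast
      qed
      have Yn: "T N (M - N) (U M) \<noteq> []" using len UVM by fastforce
      then have Y: "T N (M - N) (U M) = U N # tl (T N (M - N) (U M))"
        using hl[OF UVM(1)] by (metis list.collapse)
      have "T N (M - N) (V M) @ T N (M - N) (U M) = r @ [d, b, U N] @ tl (T N (M - N) (U M))"
        using X Y bV by (metis append.assoc append_Cons append_Nil)
      then show ?thesis using Lg_sub[OF XY] by (metis sublist_appendI)
    next
      case False
      have "T N (M - N) c = butlast \<alpha> @ [last \<alpha>, b, hd \<beta>] @ tl \<beta>"
        using ab \<open>\<alpha> \<noteq> []\<close> False by simp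
      then show ?thesis using Lg_sub[OF cL] by (metis sublist_appendI)
    qed
  qed
qed

lemma part4:
  assumes lo: "letter_onto_seq A \<tau>" and a: "a \<in> A n"
  shows "E n [a]"
  unfolding E_def
proof
  fix l
  obtain N0 where N0: "N0 \<ge> n" "\<forall>N\<ge>N0. \<forall>b\<in>A N. l \<le> length (T n (N - n) b)"
    using growth[of n l] by blast
  define N where "N = Suc N0"
  have Nn: "n + (N - n) = N" using N0 by (simp add: N_def)
  obtain b where b: "b \<in> A N" "a \<in> set (T n (N - n) b)" using chain[OF lo a, of "N - n"] Nn by auto
  obtain d e where de: "[d, b, e] \<in> Lg N" using three_legal[OF lo b(1)] by blast
  have dA: "d \<in> A N" "e \<in> A N" using Lg_set[OF de] by auto
  have "[d, b, e] \<in> Lg (n + (N - n))" using de Nn by simp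
  from Lg_lift[OF this] have "mw (T n (N - n)) [d, b, e] \<in> Lg n" .
  then have L: "T n (N - n) d @ T n (N - n) b @ T n (N - n) e \<in> Lg n" by simp
  obtain \<alpha> \<beta> where ab: "T n (N - n) b = \<alpha> @ a # \<beta>" using b(2) by (meson split_list)
  have "l \<le> length (T n (N - n) d)" "l \<le> length (T n (N - n) e)" using N0 dA by (auto simp: N_def)
  then show "\<exists>p s. l \<le> length p \<and> l \<le> length s \<and> p @ [a] @ s \<in> Lg n"
    using L ab by (intro exI[of _ "T n (N - n) d @ \<alpha>"] exI[of _ "\<beta> @ T n (N - n) e"]) auto
qed

end


context DSq begin

lemma part3:
  assumes x: "x \<in> level A \<tau> n" and ne: "\<forall>M\<ge>n. \<exists>f. f \<in> AtL M"
  shows "\<exists>N>n. \<exists>a\<in>AtL N. sublist (central_word x l) (T n (N - n) a)"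
proof -
  define w where "w = central_word x l"
  have Ew: "E n w" unfolding w_def by (rule cw_E[OF x])
  have wne: "w \<noteq> []" by (simp add: w_def central_word_def)
  obtain N1 where N1: "N1 \<ge> n" "\<forall>N\<ge>N1. \<forall>a\<in>A N. length w \<le> length (T n (N - n) a)"
    using growth[of n "length w"] by blast
  define k' where "k' = N1 - n"
  define k where "k = Suc k'"
  have nk: "n + k = Suc N1" "n + k' = N1" using N1 by (auto simp: k_def k'_def)
  have long: "\<forall>a\<in>A (n + k). length w \<le> length (T n k a)"
  proof
    fix a assume "a \<in> A (n + k)"
    then have "a \<in> A (Suc N1)" using nk by simp
    then have "length w \<le> length (T n (Suc N1 - n) a)" using N1(2) le_SucI[OF order_refl] by blast
    moreover have "Suc N1 - n = k" using nk by simp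
    ultimately show "length w \<le> length (T n k a)" by simp
  qed
  have long': "\<forall>a\<in>A N1. length w \<le> length (T n k' a)" using N1 by (auto simp: k'_def)
  obtain hm \<alpha> \<beta> where hm: "hm \<noteq> []" "set hm \<subseteq> A (n + k)" "E (n + k) hm"
    "mw (T n k) hm = \<alpha> @ w @ \<beta>" "length \<alpha> < length (T n k (hd hm))"
    "length \<beta> < length (T n k (last hm))"
    using desub[OF Ew wne, of k] by (auto simp: k_def)
  have "length hm < 3"
  proof (rule ccontr)
    assume "\<not> length hm < 3"
    then have h3: "3 \<le> length hm" by simp
    then have "hm ! 1 \<in> set hm" by simp
    then have "length w \<le> length (T n k (hm ! 1))" using long hm(2) by blast
    with len3[OF h3, of "T n k"] hm(4,5,6) show False by simp
  qed
  moreover have "length hm \<noteq> 0" using hm(1) by simp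
  ultimately consider "length hm = 1" | "length hm = 2" by linarith
  then show ?thesis
  proof cases
    case 1
    then obtain a where a: "hm = [a]" by (cases hm) auto
    have "a \<in> AtL (n + k)" using a hm(2,3) AtL_iff by auto
    moreover have "sublist w (T n k a)" using hm(4) a by (simp add: sublist_def) blast
    ultimately show ?thesis unfolding w_def by (intro exI[of _ "n + k"]) (auto simp: k_def)
  next
    case 2
    then obtain d e where de: "hm = [d, e]" by (cases hm; cases "tl hm") auto
    have dA: "d \<in> A (Suc N1)" "e \<in> A (Suc N1)" using hm(2) de nk by auto
    have UV: "U N1 \<in> A N1" "V N1 \<in> A N1" using UV_mem dA by blast+
    have Tk: "T n k z = mw (T n k') (\<tau> N1 z)" for z
      using tc_comp[of \<tau> n k' 1 z] nk by (simp add: k_def)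
    have td: "\<tau> N1 d = butlast (\<tau> N1 d) @ [V N1]" using tau_ne[OF dA(1)] lastV[OF dA(1)]
      by (metis append_butlast_last_id)
    have te: "\<tau> N1 e = U N1 # tl (\<tau> N1 e)" using tau_ne[OF dA(2)] hdU[OF dA(2)]
      by (metis list.collapse)
    have D: "T n k d = mw (T n k') (butlast (\<tau> N1 d)) @ T n k' (V N1)"
      using Tk[of d] td by (metis mw_append mw_Cons mw_Nil append_Nil2)
    have Ee: "T n k e = T n k' (U N1) @ mw (T n k') (tl (\<tau> N1 e))"
      using Tk[of e] te by (metis mw_Cons)
    have "T n k d @ T n k e = \<alpha> @ w @ \<beta>" using hm(4) de by simp
    moreover have "length \<alpha> < length (T n k d)" "length \<beta> < length (T n k e)" using hm(5,6) de by auto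
    ultimately have sw: "sublist w (T n k' (V N1) @ T n k' (U N1))"
      using junction_sub[OF _ _ _ D Ee] long' UV by blast
    have ne': "\<forall>M\<ge>Suc N1. \<exists>f. f \<in> AtL M" using ne N1 by auto
    obtain M f where Mf: "M > N1" "f \<in> AtL M" "sublist [V N1, U N1] (T N1 (M - N1) f)"
      using junc_exists[OF ne'] unfolding AtL_def by blast
    have "sublist (mw (T n k') [V N1, U N1]) (mw (T n k') (T N1 (M - N1) f))"
      by (rule sublist_mw[OF Mf(3)])
    moreover have "mw (T n k') (T N1 (M - N1) f) = T n (M - n) f"
      using tc_comp[of \<tau> n k' "M - N1" f] nk Mf(1) N1(1) by (simp add: k'_def)
    ultimately have "sublist (T n k' (V N1) @ T n k' (U N1)) (T n (M - n) f)" by simp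
    then have "sublist w (T n (M - n) f)" using sw sublist_trans' by blast
    then show ?thesis unfolding w_def using Mf N1 by (intro exI[of _ M]) auto
  qed
qed

lemma AtL_ne: assumes "a \<in> AtL n" shows "\<exists>f. f \<in> AtL (n + j)"
proof (induct j)
  case 0 then show ?case using assms by auto
next
  case (Suc j)
  then obtain b where "b \<in> AtL (n + j)" by blast
  then obtain c where "c \<in> A (Suc (n + j))" "E (Suc (n + j)) [c]" using part2 AtL_iff by blast
  then show ?case using AtL_iff by auto
qed

end

theorem lemma4p6:
  fixes A :: "nat \<Rightarrow> 'a set" and \<tau> :: "nat \<Rightarrow> 'a \<Rightarrow> 'a list"
  assumes "directive_seq A \<tau>" and "everywhere_growing A \<tau>" and "proper_seq A \<tau>"
  defines "At \<equiv> (\<lambda>n. {a \<in> A n. [a] \<in> lang (level A \<tau> n)})"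
  shows "(\<forall>n. \<forall>a\<in>At (Suc n). set (\<tau> n a) \<subseteq> At n)
       \<and> letter_onto_seq At \<tau>
       \<and> (\<forall>n. level At \<tau> n = level A \<tau> n)
       \<and> (letter_onto_seq A \<tau> \<longrightarrow> (\<forall>n. A n \<subseteq> {a. [a] \<in> lang (level A \<tau> n)}))"
proof -
  have "\<forall>n. \<exists>uv. \<forall>a\<in>A (Suc n). hd (\<tau> n a) = fst uv \<and> last (\<tau> n a) = snd uv"
    using assms(3) unfolding proper_seq_def by (metis fst_conv snd_conv)
  then obtain g where g: "\<forall>n. \<forall>a\<in>A (Suc n). hd (\<tau> n a) = fst (g n) \<and> last (\<tau> n a) = snd (g n)"
    by metis
  interpret DSq A \<tau> "\<lambda>n. fst (g n)" "\<lambda>n. snd (g n)"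
    using assms(1,2) g by unfold_locales auto
  have AtE: "At = AtL" unfolding At_def AtL_def by (rule refl)
  have p1: "\<forall>n. \<forall>a\<in>AtL (Suc n). set (\<tau> n a) \<subseteq> AtL n"
    using part1 tau_set AtL_iff by blast
  have p2: "letter_onto_seq AtL \<tau>"
    unfolding letter_onto_seq_def using part2 AtL_iff by blast
  have p3: "level AtL \<tau> n = level A \<tau> n" for n
  proof
    show "level AtL \<tau> n \<subseteq> level A \<tau> n"
      unfolding level_def AtL_def by blast
    show "level A \<tau> n \<subseteq> level AtL \<tau> n"
    proof
      fix x assume x: "x \<in> level A \<tau> n"
      have xi: "x i \<in> AtL n" for i
      proof -
        have "x i \<in> A n" using x unfolding level_def by blast
        moreover have "[x i] = map (\<lambda>j. x (i + int j)) [0..<length [x i]]" by simp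
        then have "\<exists>i'. [x i] = map (\<lambda>j. x (i' + int j)) [0..<length [x i]]" by (rule exI)
        then have "\<exists>y\<in>level A \<tau> n. \<exists>i'. [x i] = map (\<lambda>j. y (i' + int j)) [0..<length [x i]]"
          using x by (rule_tac bexI)
        then have "[x i] \<in> lang (level A \<tau> n)" unfolding lang_def by (rule CollectI)
        ultimately show ?thesis unfolding AtL_def by blast
      qed
      have ne: "\<forall>M\<ge>n. \<exists>f. f \<in> AtL M"
      proof (intro allI impI)
        fix M assume "n \<le> M"
        then show "\<exists>f. f \<in> AtL M" using AtL_ne[OF xi[of 0], of "M - n"] by simp
      qed
      show "x \<in> level AtL \<tau> n"
        unfolding level_def using xi part3[OF x ne] by blast
    qed
  qed
  have p4: "letter_onto_seq A \<tau> \<longrightarrow> (\<forall>n. A n \<subseteq> {a. [a] \<in> lang (level A \<tau> n)})"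
    using part4 koenig by blast
  show ?thesis unfolding AtE using p1 p2 p3 p4 by blast
qed

end
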